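(* Let $(X,w)$ be a weighted system in a real Euclidean affine space $\mathbb{A}$ with $\mu_0=0$. The following are equivalent: (i) $\mu_1(p)=\overrightarrow{O}$ for all $p\in\mathbb{A}$; (ii) $\mu_2$ is constant on $\mathbb{A}$; (iii) the restriction of $\mu_2$ to $X$ is constant.
   Context: A weighted system is a finite set $X\subset\mathbb{A}$ with $w:X\to\mathbb{R}$. $\mu_0=\sum_xw(x)$, $\mu_1(p)=\sum_xw(x)\overrightarrow{px}$, $\mu_2(p)=\sum_xw(x)\overrightarrow{px}^2$, where the square of a vector is its inner product with itself. *)

theory Defs
  imports "HOL-Analysis.Analysis"
begin

text \<open>The Euclidean affine space is modelled by a type of class euclidean_space;
  the vector from p to x is x - p, and the square of a vector is its inner product
  with itself. A weighted system is a finite set X with weights w (only values on X matter).\<close>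

definition mu0 :: "'a set \<Rightarrow> ('a \<Rightarrow> real) \<Rightarrow> real" where
  "mu0 X w = (\<Sum>x\<in>X. w x)"

definition mu1 :: "'a::euclidean_space set \<Rightarrow> ('a \<Rightarrow> real) \<Rightarrow> 'a \<Rightarrow> 'a" where
  "mu1 X w p = (\<Sum>x\<in>X. w x *\<^sub>R (x - p))"

definition mu2 :: "'a::euclidean_space set \<Rightarrow> ('a \<Rightarrow> real) \<Rightarrow> 'a \<Rightarrow> real" where
  "mu2 X w p = (\<Sum>x\<in>X. w x * ((x - p) \<bullet> (x - p)))"

end

theory Submission
  imports Defs
begin

lemma mu1_eq:
  fixes X :: "'a::euclidean_space set"
  assumes "finite X" "mu0 X w = 0"
  shows "mu1 X w p = (\<Sum>x\<in>X. w x *\<^sub>R x)"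
proof -
  have "mu1 X w p = (\<Sum>x\<in>X. w x *\<^sub>R x) - (\<Sum>x\<in>X. w x *\<^sub>R p)"
    unfolding mu1_def by (simp add: scaleR_diff_right sum_subtractf)
  also have "(\<Sum>x\<in>X. w x *\<^sub>R p) = 0"
    using assms(2) by (simp add: mu0_def scaleR_sum_left[symmetric])
  finally show ?thesis by simp
qed

lemma mu2_eq:
  fixes X :: "'a::euclidean_space set"
  assumes "finite X" "mu0 X w = 0"
  shows "mu2 X w p = (\<Sum>x\<in>X. w x * (x \<bullet> x)) - 2 * (p \<bullet> (\<Sum>x\<in>X. w x *\<^sub>R x))"
proof -
  have "mu2 X w p = (\<Sum>x\<in>X. w x * (x \<bullet> x) - 2 * (w x * (x \<bullet> p)) + w x * (p \<bullet> p))"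
    unfolding mu2_def
    by (rule sum.cong) (auto simp: inner_diff_left inner_diff_right inner_commute algebra_simps)
  also have "\<dots> = (\<Sum>x\<in>X. w x * (x \<bullet> x)) - 2 * (\<Sum>x\<in>X. w x * (x \<bullet> p)) + (\<Sum>x\<in>X. w x) * (p \<bullet> p)"
    by (simp add: sum.distrib sum_subtractf sum_distrib_left sum_distrib_right)
  also have "(\<Sum>x\<in>X. w x) = 0" using assms(2) by (simp add: mu0_def)
  also have "(\<Sum>x\<in>X. w x * (x \<bullet> p)) = p \<bullet> (\<Sum>x\<in>X. w x *\<^sub>R x)"
    by (simp add: inner_sum_right inner_commute)
  finally show ?thesis by simp
qed

theorem corollary2p5:
  fixes X :: "'a::euclidean_space set" and w :: "'a \<Rightarrow> real"
  assumes "finite X" and "mu0 X w = 0"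
  shows "((\<forall>p. mu1 X w p = 0) \<longleftrightarrow> (\<exists>c. \<forall>p. mu2 X w p = c))
       \<and> ((\<exists>c. \<forall>p. mu2 X w p = c) \<longleftrightarrow> (\<exists>c. \<forall>x\<in>X. mu2 X w x = c))"
proof -
  define S where "S = (\<Sum>x\<in>X. w x *\<^sub>R x)"
  define A where "A = (\<Sum>x\<in>X. w x * (x \<bullet> x))"
  have m1: "\<And>p. mu1 X w p = S" using mu1_eq[OF assms] S_def by simp
  have m2: "\<And>p. mu2 X w p = A - 2 * (p \<bullet> S)" using mu2_eq[OF assms] S_def A_def by simp
  have a: "(\<exists>c. \<forall>p. mu2 X w p = c) \<Longrightarrow> S = 0"
  proof -
    assume "\<exists>c. \<forall>p. mu2 X w p = c"
    then obtain c where "\<forall>p. mu2 X w p = c" by blast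
    then have "mu2 X w S = mu2 X w 0" by simp
    then have "S \<bullet> S = 0" by (simp add: m2)
    then show "S = 0" by simp
  qed
  have b: "(\<exists>c. \<forall>x\<in>X. mu2 X w x = c) \<Longrightarrow> S = 0"
  proof -
    assume "\<exists>c. \<forall>x\<in>X. mu2 X w x = c"
    then obtain c where c: "\<forall>x\<in>X. mu2 X w x = c" by blast
    have "(\<Sum>x\<in>X. w x * mu2 X w x) = (\<Sum>x\<in>X. w x * c)"
      using c by simp
    also have "\<dots> = 0" using assms(2) by (simp add: mu0_def sum_distrib_right[symmetric])
    finally have 0: "(\<Sum>x\<in>X. w x * mu2 X w x) = 0" .
    have "(\<Sum>x\<in>X. w x * mu2 X w x) = (\<Sum>x\<in>X. w x * A - 2 * (w x * (x \<bullet> S)))"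
      by (simp add: m2 algebra_simps)
    also have "\<dots> = (\<Sum>x\<in>X. w x) * A - 2 * (\<Sum>x\<in>X. w x * (x \<bullet> S))"
      by (simp add: sum_subtractf sum_distrib_left sum_distrib_right)
    also have "(\<Sum>x\<in>X. w x * (x \<bullet> S)) = S \<bullet> S"
      by (simp add: S_def inner_sum_left)
    also have "(\<Sum>x\<in>X. w x) = 0" using assms(2) by (simp add: mu0_def)
    finally have "S \<bullet> S = 0" using 0 by simp
    then show "S = 0" by simp
  qed
  show ?thesis
    using a b m1 m2 by auto
qed

end
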